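(* Let $\alpha\in(0,1)$ and $R>0$. A target moves with position $(0,y_T(t))$, $\dot y_T=1$, and an observer with position $(x_O(t),y_O(t))$, $\dot x_O=\alpha\cos\psi$, $\dot y_O=\alpha\sin\psi$. Suppose at time $t_2$ the target lies on the boundary of the observer's disk of radius $R$ with relative bearing $\lambda\in[-\pi,\pi]$, i.e. $\big(x_O(t_2),y_O(t_2)-y_T(t_2)\big)=R(\sin\lambda,\cos\lambda)$, and that for $t\ge t_2$ the observer uses the constant heading $\psi\equiv\cos^{-1}\!\left(\frac{(\alpha^2-1)\sin\lambda}{\alpha^2+2\alpha\cos\lambda+1}\right)$. Then for every $t$ with $t_2<t<t_2+\frac{2R(\alpha+\cos\lambda)}{1-\alpha^2}$ one has $x_O(t)^2+(y_O(t)-y_T(t))^2<R^2$; i.e. the target remains strictly inside the observation disk until the escape time $t_f=t_2+\frac{2R(\alpha+\cos\lambda)}{1-\alpha^2}$.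
   Context: The observation disk is the closed disk of radius $R$ centered at the observer; the target escapes when its distance to the observer exceeds $R$. Headings are measured counterclockwise from the positive $x$-axis. *)

theory Defs
  imports "HOL-Analysis.Analysis"
begin

end

theory Submission
  imports Defs
begin

lemma alg:
  fixes a R s c k sg D tau :: real
  assumes a: "0 < a" "a < 1" and R: "0 < R" and D: "D = a^2 + 2*a*c + 1" "D > 0"
    and sc: "s^2 + c^2 = 1" and tau: "0 < tau" "tau * (1 - a^2) < 2*R*(a + c)"
    and k: "k * D = (a^2 - 1) * s" and sg: "sg * D = 2*a + (1 + a^2)*c"
  shows "(R* s + tau*a*k)^2 + (R*c + tau*(a* sg - 1))^2 < R^2"
proof -
  have kk: "k = (a^2 - 1) * s / D" using k D by (simp add: field_simps)
  have ss: "sg = (2*a + (1 + a^2)*c) / D" using sg D by (simp add: field_simps)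
  have s2: "s^2 = 1 - c^2" using sc by simp
  have B: "a* s*k + c*(a* sg - 1) = (a^2 - 1)*(a + c)/D"
  proof -
    have "(a* s*k + c*(a* sg - 1)) * D = a*(a^2-1)* s^2 + c*(a*(2*a + (1 + a^2)*c) - D)"
    proof -
      have "(a * s*k + c*(a * sg - 1)) * D = a * s*(k*D) + c*(a*(sg*D) - D)" by (simp add: algebra_simps)
      also have "\<dots> = a*(a^2-1) * s^2 + c*(a*(2*a + (1 + a^2)*c) - D)" unfolding k sg by (simp add: power2_eq_square)
      finally show ?thesis .
    qed
    also have "\<dots> = (a^2 - 1)*(a + c)" unfolding s2 D(1) by (simp add: algebra_simps power2_eq_square)
    finally show ?thesis using D(2) by (simp add: field_simps)
  qed
  have ks: "k^2 + sg^2 = 1"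
  proof -
    have "(k^2 + sg^2) * D^2 = (k*D)^2 + (sg*D)^2" by (simp add: algebra_simps power2_eq_square)
    also have "\<dots> = ((a^2 - 1) * s)^2 + (2*a + (1 + a^2)*c)^2" unfolding k sg ..
    also have "\<dots> = D^2" unfolding power_mult_distrib s2 D(1) by (simp add: algebra_simps power2_eq_square)
    finally show ?thesis using D(2) by simp
  qed
  have A: "(a*k)^2 + (a* sg - 1)^2 = (a^2 - 1)^2 / D"
  proof -
    have "(a*k)^2 + (a* sg - 1)^2 = a^2*(k^2+sg^2) - 2*a* sg + 1" by (simp add: algebra_simps power2_eq_square)
    also have "\<dots> = a^2 + 1 - 2*a* sg" using ks by simp
    also have "\<dots> = ((a^2+1)*D - 2*a*(2*a + (1 + a^2)*c)) / D"
    proof -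
      have "(a^2 + 1 - 2*a* sg)*D = (a^2+1)*D - 2*a*(sg*D)" by (simp add: algebra_simps)
      then show ?thesis unfolding sg using D(2) by (simp add: field_simps)
    qed
    also have "\<dots> = (a^2 - 1)^2 / D" unfolding D(1) by (simp add: algebra_simps power2_eq_square)
    finally show ?thesis .
  qed
  have eq: "(R* s + tau*a*k)^2 + (R*c + tau*(a* sg - 1))^2
      = R^2*(s^2+c^2) + tau*(2*R*(a* s*k + c*(a* sg - 1)) + tau*((a*k)^2 + (a* sg - 1)^2))"
    by (simp add: algebra_simps power2_eq_square)
  have "2*R*(a* s*k + c*(a* sg - 1)) + tau*((a*k)^2 + (a* sg - 1)^2)
      = (1 - a^2)/D * (tau*(1 - a^2) - 2*R*(a+c))"
    unfolding A B using D(2) by (simp add: field_simps power2_eq_square)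
  also have "\<dots> < 0"
  proof (rule mult_pos_neg)
    show "0 < (1 - a^2)/D" using a D(2) by (simp add: power_less_one_iff abs_square_less_1)
    show "tau*(1 - a^2) - 2*R*(a+c) < 0" using tau by simp
  qed
  finally have neg: "2*R*(a* s*k + c*(a* sg - 1)) + tau*((a*k)^2 + (a* sg - 1)^2) < 0" .
  show ?thesis unfolding eq sc using mult_pos_neg[OF tau(1) neg] by simp
qed

theorem lemma2:
  fixes \<alpha> R lam t2 :: real
    and xO yO yT psi :: "real \<Rightarrow> real"
  assumes alpha: "0 < \<alpha>" "\<alpha> < 1"
    and R: "0 < R"
    and lam_range: "-pi \<le> lam" "lam \<le> pi"
    and dT: "\<And>t. (yT has_real_derivative 1) (at t)"
    and dx: "\<And>t. (xO has_real_derivative \<alpha> * cos (psi t)) (at t)"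
    and dy: "\<And>t. (yO has_real_derivative \<alpha> * sin (psi t)) (at t)"
    and init: "xO t2 = R * sin lam" "yO t2 - yT t2 = R * cos lam"
    and heading: "\<And>t. t \<ge> t2 \<Longrightarrow>
        psi t = arccos ((\<alpha>^2 - 1) * sin lam / (\<alpha>^2 + 2 * \<alpha> * cos lam + 1))"
  shows "\<forall>t. t2 < t \<and> t < t2 + 2 * R * (\<alpha> + cos lam) / (1 - \<alpha>^2) \<longrightarrow>
           (xO t)^2 + (yO t - yT t)^2 < R^2"
proof (intro allI impI)
  fix t assume tt: "t2 < t \<and> t < t2 + 2 * R * (\<alpha> + cos lam) / (1 - \<alpha>^2)"
  define s where "s = sin lam"
  define c where "c = cos lam"
  define D where "D = \<alpha>^2 + 2 * \<alpha> * c + 1"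
  define k where "k = (\<alpha>^2 - 1) * s / D"
  define tau where "tau = t - t2"
  have sc: "s^2 + c^2 = 1" unfolding s_def c_def by simp
  have a2: "\<alpha>^2 < 1" using alpha by (simp add: power_less_one_iff abs_square_less_1)
  have tau0: "0 < tau" using tt tau_def by simp
  have tauT: "tau * (1 - \<alpha>^2) < 2*R*(\<alpha> + c)"
    using tt a2 unfolding tau_def c_def by (simp add: field_simps)
  have ac: "\<alpha> + c > 0"
  proof -
    have "0 < tau * (1 - \<alpha>^2)" using tau0 a2 by simp
    then show ?thesis using tauT R by (smt (verit) zero_less_mult_iff)
  qed
  have Dpos: "D > 0"
  proof -
    have "D = (\<alpha> + c)^2 + s^2" unfolding D_def using sc by (simp add: algebra_simps power2_eq_square)
    then show ?thesis using ac by (smt (verit) zero_le_power2 power2_less_0 zero_less_power)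
  qed
  define S where "S = 2*\<alpha> + (1 + \<alpha>^2)*c"
  have Spos: "S \<ge> 0"
  proof -
    have "(1 + \<alpha>^2)*c > (1 + \<alpha>^2)*(-\<alpha>)" using ac by (intro mult_strict_left_mono) (auto simp: add_pos_nonneg)
    moreover have "\<alpha> * \<alpha>^2 < \<alpha>" using a2 alpha by simp
    ultimately show ?thesis unfolding S_def by (simp add: algebra_simps power2_eq_square)
  qed
  have iden: "D^2 - ((\<alpha>^2 - 1) * s)^2 = S^2"
  proof -
    have s2: "s^2 = 1 - c^2" using sc by simp
    show ?thesis unfolding power_mult_distrib s2 D_def S_def by (simp add: algebra_simps power2_eq_square)
  qed
  have k2: "1 - k^2 = (S/D)^2"
  proof -
    have "1 - k^2 = (D^2 - ((\<alpha>^2 - 1) * s)^2) / D^2"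
      unfolding k_def using Dpos by (simp add: field_simps power_divide)
    then show ?thesis unfolding iden by (simp add: power_divide)
  qed
  have kb: "-1 \<le> k \<and> k \<le> 1"
  proof -
    have "k^2 \<le> 1" using k2 by (smt (verit) zero_le_power2)
    then have "\<bar>k\<bar> \<le> 1" by (simp add: abs_square_le_1)
    then show ?thesis by auto
  qed
  have psiC: "\<And>u. u \<ge> t2 \<Longrightarrow> psi u = arccos k"
    using heading unfolding k_def D_def s_def c_def by simp
  have cosk: "cos (arccos k) = k" using kb by (simp add: cos_arccos)
  have sink: "sin (arccos k) = S / D"
  proof -
    have "sin (arccos k) = sqrt (1 - k^2)" by (rule sin_arccos_abs) (use kb in auto)
    also have "\<dots> = S / D" unfolding k2 using Spos Dpos by simp
    finally show ?thesis .
  qed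
  have tl: "t2 < t" using tt by simp
  obtain z1 where z1: "t2 < z1" "z1 < t" "xO t - xO t2 = (t - t2) * (\<alpha> * cos (psi z1))"
    using MVT2[OF tl, of xO "\<lambda>u. \<alpha> * cos (psi u)"] dx by blast
  obtain z2 where z2: "t2 < z2" "z2 < t" "yO t - yO t2 = (t - t2) * (\<alpha> * sin (psi z2))"
    using MVT2[OF tl, of yO "\<lambda>u. \<alpha> * sin (psi u)"] dy by blast
  obtain z3 where z3: "yT t - yT t2 = (t - t2) * 1"
    using MVT2[OF tl, of yT "\<lambda>u. 1"] dT by blast
  have xt: "xO t = R* s + tau*\<alpha>*k"
    using z1 psiC[of z1] cosk init(1) unfolding tau_def s_def by simp
  have yt: "yO t - yT t = R*c + tau*(\<alpha>*(S/D) - 1)"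
    using z2 z3 psiC[of z2] sink init(2) unfolding tau_def c_def by (simp add: algebra_simps)
  have "(R* s + tau*\<alpha>*k)^2 + (R*c + tau*(\<alpha>*(S/D) - 1))^2 < R^2"
    apply (rule alg[OF alpha R D_def Dpos sc tau0 tauT])
    using Dpos by (auto simp: k_def S_def)
  then show "(xO t)^2 + (yO t - yT t)^2 < R^2" unfolding xt yt .
qed

end
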